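(* Suppose $P=P_{(a,b)}$ is a point of $\mathcal X_3$ such that $\alpha(P)^2-\alpha(P)+1=0$. Then for every positive integer $i$ with $i\le m-2$ there exists a function $g_i\in L((3i+3)D_\infty)$ with $v_P(g_i)=3i+2$.
   Context: Let $q$ be a prime power with $q\equiv2\pmod3$, $m=(q+1)/3$, and let $\mathcal X_3$ be the nonsingular projective model (defined over $\mathbb F_{q^2}$) of the plane curve $y^{q+1}+x^{2m}+x^m=0$. Let $P_\infty^1,\dots,P_\infty^m$ be the $m$ points of $\mathcal X_3$ lying over the point at infinity (poles of $x$), $D_\infty=\sum_jP_\infty^j$, and $L(D)$ the Riemann–Roch space of $D$. Points not centered at $(0,0)$ or at infinity have affine coordinates $(a,b)$, $a\ne0$, and are denoted $P_{(a,b)}$; for such points with $a^m\neq -1$, $\alpha(P_{(a,b)})=a^m/(1+a^m)$. $v_P$ is the valuation at $P$. *)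

theory Defs
  imports "HOL-Computational_Algebra.Polynomial" "HOL-Computational_Algebra.Fraction_Field"
begin

text \<open>The function field of X_3 over the field 'k is modelled as K(x)[Y]/(f) with
  K(x) = 'k poly fract and f = Y^(q+1) + x^(2m) + x^m.  A function is represented
  by any element of K(x)[Y]; two representatives denote the same function iff
  their difference is divisible by f.\<close>

definition mm :: "nat \<Rightarrow> nat" where
  "mm q = (q + 1) div 3"

definition emb :: "'k::field poly \<Rightarrow> 'k poly fract" where
  "emb c = Fract c 1"

definition xfun :: "'k::field poly fract" where
  "xfun = emb [:0, 1:]"

definition curve_poly :: "nat \<Rightarrow> 'k::field poly fract poly" where
  "curve_poly q = monom 1 (q + 1) + [: xfun ^ (2 * mm q) + xfun ^ (mm q) :]"

definition lift2 :: "'k::field poly poly \<Rightarrow> 'k poly fract poly" where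
  "lift2 w = map_poly emb w"

definition ev2 :: "'k::field poly poly \<Rightarrow> 'k \<Rightarrow> 'k \<Rightarrow> 'k" where
  "ev2 w a b = poly (map_poly (\<lambda>c. poly c a) w) b"

text \<open>Local ring O_P of the affine curve at P = (a,b): functions u/w with
  u, w polynomial in x, y and w(a,b) \<noteq> 0.\<close>
definition local_ring :: "nat \<Rightarrow> 'k::field \<Rightarrow> 'k \<Rightarrow> 'k poly fract poly \<Rightarrow> bool" where
  "local_ring q a b g \<longleftrightarrow>
     (\<exists>u w. ev2 w a b \<noteq> 0 \<and> (lift2 w * g - lift2 u) mod curve_poly q = 0)"

text \<open>v_P(g) = n (for a nonsingular affine point P=(a,b) with b \<noteq> 0, where x - a
  is a local parameter): g \<in> (x-a)^n O_P but g \<notin> (x-a)^(n+1) O_P.\<close>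
definition val_at :: "nat \<Rightarrow> 'k::field \<Rightarrow> 'k \<Rightarrow> 'k poly fract poly \<Rightarrow> nat \<Rightarrow> bool" where
  "val_at q a b g n \<longleftrightarrow>
     local_ring q a b (smult (inverse (emb [:-a, 1:] ^ n)) g) \<and>
     \<not> local_ring q a b (smult (inverse (emb [:-a, 1:] ^ (n + 1))) g)"

text \<open>Integrality over K[x] (i.e. no poles outside the places over x = \<infinity>).\<close>
definition integral_Kx :: "nat \<Rightarrow> 'k::field poly fract poly \<Rightarrow> bool" where
  "integral_Kx q g \<longleftrightarrow>
     (\<exists>p :: 'k poly poly. lead_coeff p = 1 \<and>
        poly (map_poly (\<lambda>c. [: emb c :]) p) g mod curve_poly q = 0)"

definition O_inf :: "'k::field poly fract set" where
  "O_inf = {c. \<exists>u w. w \<noteq> 0 \<and> degree u \<le> degree w \<and> c = Fract u w}"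

text \<open>Integrality over O_inf (= lying in all valuation rings of places over x = \<infinity>).\<close>
definition integral_Oinf :: "nat \<Rightarrow> 'k::field poly fract poly \<Rightarrow> bool" where
  "integral_Oinf q g \<longleftrightarrow>
     (\<exists>p :: 'k poly fract poly. lead_coeff p = 1 \<and> (\<forall>i. coeff p i \<in> O_inf) \<and>
        poly (map_poly (\<lambda>c. [: c :]) p) g mod curve_poly q = 0)"

text \<open>Membership in L(3j D_inf).  Since the pole divisor of x is 3 D_inf
  (each P_inf^j has v(x) = -3), g \<in> L(3j D_inf) iff g is integral over K[x]
  and g / x^j is integral over O_inf.\<close>
definition in_L3 :: "nat \<Rightarrow> nat \<Rightarrow> 'k::field poly fract poly \<Rightarrow> bool" where
  "in_L3 q j g \<longleftrightarrow> integral_Kx q g \<and> integral_Oinf q (smult (inverse (xfun ^ j)) g)"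

end

theory Submission
  imports Defs "HOL-Computational_Algebra.Primes" "Jordan_Normal_Form.Char_Poly"
begin


lemma emb_add: "emb (c + d) = emb c + emb d" by (simp add: emb_def)
lemma emb_mult: "emb (c * d) = emb c * emb d" by (simp add: emb_def)
lemma emb_0: "emb 0 = 0" by (simp add: emb_def Zero_fract_def)
lemma emb_1: "emb 1 = 1" by (simp add: emb_def One_fract_def)
lemma emb_eq_0: "emb c = 0 \<longleftrightarrow> c = 0" by (simp add: emb_def Zero_fract_def eq_fract)

interpretation emb_hom: inj_comm_ring_hom "emb :: 'k::field poly \<Rightarrow> 'k poly fract"
  by unfold_locales (auto simp: emb_add emb_mult emb_1 emb_eq_0)

interpretation lift2_hom: map_poly_inj_comm_ring_hom "emb :: 'k::field poly \<Rightarrow> 'k poly fract"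
  ..

lemma lift2_hom: "inj_comm_ring_hom (lift2 :: 'k::field poly poly \<Rightarrow> _)"
  unfolding lift2_def[abs_def] by (rule lift2_hom.inj_comm_ring_hom_axioms)

interpretation lift2h: inj_comm_ring_hom "lift2 :: 'k::field poly poly \<Rightarrow> _"
  by (rule lift2_hom)

lemma ev2_hom: "comm_ring_hom (\<lambda>w. ev2 (w :: 'k::field poly poly) a b)"
proof -
  interpret pa: comm_ring_hom "\<lambda>c. poly (c::'k poly) a" by unfold_locales auto
  interpret mpa: map_poly_comm_ring_hom "\<lambda>c. poly (c::'k poly) a" ..
  interpret pb: comm_ring_hom "\<lambda>c. poly (c::'k poly) b" by unfold_locales auto
  show ?thesis unfolding ev2_def
    by unfold_locales (auto simp: hom_distribs)
qed

lemma ev2_X: "ev2 [:0, 1:] a b = b" by (simp add: ev2_def)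
lemma ev2_const: "ev2 [:c:] a b = poly c a" by (cases "c = 0") (auto simp: ev2_def map_poly_pCons)

lemma lift2_const: "lift2 [:c:] = [:emb c:]" by (cases "c = 0") (auto simp: lift2_def map_poly_pCons emb_0)
lemma lift2_X: "lift2 [:0, 1:] = [:0, 1:]" by (simp add: lift2_def emb_0 emb_1)

lemma lift2_monom: "lift2 (monom c n) = monom (emb c) n" by (simp add: lift2_def)

lemma frob_add:
  fixes u v :: "'r::comm_semiring_1"
  assumes "prime CHAR('r)" "Q = CHAR('r) ^ e"
  shows "(u + v) ^ Q = u ^ Q + v ^ Q"
  using freshmans_dream'[OF assms] .

lemma frob_diff:
  fixes u v :: "'r::comm_ring_1"
  assumes pr: "prime CHAR('r)" and Qd: "Q = CHAR('r) ^ e"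
  shows "(u - v) ^ Q = u ^ Q - v ^ Q"
proof -
  have Qpos: "Q > 0" using pr Qd by (simp add: prime_gt_0_nat)
  have "(1 + (-1::'r)) ^ Q = 1 ^ Q + (-1) ^ Q" by (rule frob_add[OF pr Qd])
  then have h1: "1 + (-1::'r) ^ Q = 0" using Qpos by (simp add: power_0_left)
  have m1: "(-1::'r) ^ Q = -1"
  proof -
    have "(-1::'r) ^ Q = (1 + (-1) ^ Q) - 1" by simp
    also have "\<dots> = -1" using h1 by simp
    finally show ?thesis .
  qed
  have "(u + (-v)) ^ Q = u ^ Q + (-v) ^ Q" by (rule frob_add[OF pr Qd])
  also have "(-v) ^ Q = (-1) ^ Q * v ^ Q" by (metis mult_minus1 power_mult_distrib)
  finally show ?thesis using m1 by simp
qed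

lemma degree_reduce_less:
  fixes f H :: "'r::comm_ring_1 poly"
  assumes lc: "lead_coeff f = 1" and d: "degree f \<ge> 1" and dH: "degree H \<ge> degree f"
  shows "degree (H - monom (lead_coeff H) (degree H - degree f) * f) < degree H"
proof -
  let ?n = "degree H - degree f"
  let ?M = "monom (lead_coeff H) ?n * f"
  have dM: "degree ?M \<le> degree H"
  proof -
    have "degree (monom (lead_coeff H) ?n) \<le> ?n" by (rule degree_monom_le)
    then show ?thesis using dH by (intro order_trans[OF degree_mult_le]) simp
  qed
  have cM: "coeff ?M (degree H) = lead_coeff H"
  proof -
    have "coeff ?M (?n + degree f) = lead_coeff H * coeff f (degree f)"
      by (simp add: coeff_monom_mult)
    then show ?thesis using dH lc by simp
  qed
  have dD: "degree (H - ?M) \<le> degree H" using dM by (simp add: degree_diff_le)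
  have cD: "coeff (H - ?M) (degree H) = 0" using cM by simp
  have Hpos: "degree H > 0" using d dH by simp
  show ?thesis
  proof (rule ccontr)
    assume "\<not> ?thesis"
    then have eq: "degree (H - ?M) = degree H" using dD by simp
    then have "H - ?M = 0" using cD by (metis leading_coeff_0_iff)
    then show False using eq Hpos by simp
  qed
qed

lemma monic_div_pred:
  fixes f :: "'r::comm_ring_1 poly"
  assumes lc: "lead_coeff f = 1" and d: "degree f \<ge> 1"
    and step: "\<And>H. Pr H \<Longrightarrow> degree H \<ge> degree f \<Longrightarrow>
        Pr (H - monom (lead_coeff H) (degree H - degree f) * f)"
  shows "Pr H \<Longrightarrow> \<exists>Qt R. H = Qt * f + R \<and> degree R < degree f \<and> Pr R"
proof (induction "degree H" arbitrary: H rule: less_induct)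
  case less
  show ?case
  proof (cases "degree H < degree f")
    case True
    then show ?thesis using less.prems by (intro exI[of _ 0] exI[of _ H]) simp
  next
    case False
    let ?H' = "H - monom (lead_coeff H) (degree H - degree f) * f"
    have dl: "degree ?H' < degree H" using degree_reduce_less[OF lc d] False by simp
    have P': "Pr ?H'" using step[OF less.prems] False by simp
    from less.hyps[OF dl P'] obtain Qt R where QR: "?H' = Qt * f + R" "degree R < degree f" "Pr R"
      by blast
    have "H = (Qt + monom (lead_coeff H) (degree H - degree f)) * f + R"
      using QR(1) by (simp add: algebra_simps)
    then show ?thesis using QR by blast
  qed
qed

lemma monic_div:
  fixes f :: "'r::comm_ring_1 poly"
  assumes lc: "lead_coeff f = 1" and d: "degree f \<ge> 1"
  shows "\<exists>Qt R. H = Qt * f + R \<and> degree R < degree f"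
  using monic_div_pred[OF lc d, of "\<lambda>_. True" H] by simp


definition RP :: "'a::comm_ring_1 set \<Rightarrow> 'a poly set" where
  "RP R = {p. \<forall>i. coeff p i \<in> R}"

locale subr =
  fixes R :: "'a::comm_ring_1 set"
  assumes z: "0 \<in> R" and o: "1 \<in> R" and ad: "\<And>x y. x \<in> R \<Longrightarrow> y \<in> R \<Longrightarrow> x + y \<in> R"
    and mu: "\<And>x y. x \<in> R \<Longrightarrow> y \<in> R \<Longrightarrow> x * y \<in> R" and ne: "\<And>x. x \<in> R \<Longrightarrow> -x \<in> R"
begin

lemma sum_in: "(\<And>x. x \<in> S \<Longrightarrow> g x \<in> R) \<Longrightarrow> sum g S \<in> R"
proof (induction S rule: infinite_finite_induct)
  case (infinite A) then show ?case using z by simp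
next
  case empty then show ?case using z by simp
next
  case (insert x F) then show ?case using ad by simp
qed

lemma RP_add: "p \<in> RP R \<Longrightarrow> q \<in> RP R \<Longrightarrow> p + q \<in> RP R"
  by (simp add: RP_def ad)
lemma RP_neg: "p \<in> RP R \<Longrightarrow> - p \<in> RP R"
  by (simp add: RP_def ne)
lemma RP_mult: "p \<in> RP R \<Longrightarrow> q \<in> RP R \<Longrightarrow> p * q \<in> RP R"
  unfolding RP_def by (auto simp: coeff_mult intro!: sum_in mu)
lemma RP_0: "0 \<in> RP R" by (simp add: RP_def z)
lemma RP_1: "1 \<in> RP R" by (simp add: RP_def coeff_1 z o)
lemma RP_const: "c \<in> R \<Longrightarrow> [:c:] \<in> RP R" by (simp add: RP_def coeff_pCons z split: nat.splits)
lemma RP_X: "[:0,1:] \<in> RP R" by (simp add: RP_def coeff_pCons z o split: nat.splits)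
lemma RP_sum: "(\<And>x. x \<in> S \<Longrightarrow> g x \<in> RP R) \<Longrightarrow> sum g S \<in> RP R"
proof (induction S rule: infinite_finite_induct)
  case (infinite A) then show ?case using RP_0 by simp
next
  case empty then show ?case using RP_0 by simp
next
  case (insert x F) then show ?case using RP_add by simp
qed
lemma RP_prod: "(\<And>x. x \<in> S \<Longrightarrow> g x \<in> RP R) \<Longrightarrow> prod g S \<in> RP R"
proof (induction S rule: infinite_finite_induct)
  case (infinite A) then show ?case using RP_1 by simp
next
  case empty then show ?case using RP_1 by simp
next
  case (insert x F) then show ?case using RP_mult by simp
qed
lemma RP_sign: "of_int (sign p) \<in> RP R"
  by (cases "sign p = 1") (auto simp: sign_def RP_1 RP_neg)

end

lemma det_trick:
  fixes h f :: "'a::field poly" and M :: "nat \<Rightarrow> nat \<Rightarrow> 'a" and b :: "nat \<Rightarrow> 'a poly"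
  assumes R: "subr R"
    and N: "N > 0" and b0: "b 0 = 1" and MR: "\<And>i j. i < N \<Longrightarrow> j < N \<Longrightarrow> M i j \<in> R"
    and rel: "\<And>i. i < N \<Longrightarrow> f dvd (h * b i - (\<Sum>j<N. Polynomial.smult (M i j) (b j)))"
  shows "\<exists>p. lead_coeff p = 1 \<and> (\<forall>i. coeff p i \<in> R) \<and> f dvd poly (map_poly (\<lambda>c. [:c:]) p) h"
proof -
  interpret subr R by (rule R)
  define A where "A = mat N N (\<lambda>(i,j). M i j)"
  have A: "A \<in> carrier_mat N N" by (simp add: A_def)
  define p where "p = char_poly A"
  have lc: "lead_coeff p = 1" using degree_monic_char_poly[OF A] by (simp add: p_def)
  define C where "C = char_poly_matrix A"
  have C: "C \<in> carrier_mat N N" using A by (simp add: C_def)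
  have Cij: "C $$ (i,j) = (if i = j then [:0,1:] else 0) + [:- M i j:]" if "i < N" "j < N" for i j
    using that by (simp add: C_def char_poly_matrix_def A_def)
  have CR: "C $$ (i,j) \<in> RP R" if "i < N" "j < N" for i j
    using that by (auto simp: Cij RP_add RP_X RP_0 RP_const ne MR)
  have pR: "p \<in> RP R"
    unfolding p_def char_poly_def C_def[symmetric] det_def
    using C
    by (auto intro!: RP_sum RP_mult RP_sign RP_prod CR simp: RP_0)
  define \<phi> where "\<phi> = (\<lambda>r. pcompose r h)"
  interpret ph: comm_ring_hom \<phi> unfolding \<phi>_def by (rule pcompose_hom.comm_ring_hom_axioms)
  define H where "H = map_mat \<phi> C"
  have H: "H \<in> carrier_mat N N" using C by (simp add: H_def)
  have dH: "det H = \<phi> p" unfolding H_def p_def char_poly_def C_def by (rule ph.hom_det)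
  have Hij: "H $$ (i,j) = (if i = j then h else 0) - [:M i j:]" if "i < N" "j < N" for i j
    using that C by (simp add: H_def Cij \<phi>_def hom_distribs pcompose_pCons)
  define bv where "bv = vec N b"
  have bv: "bv \<in> carrier_vec N" by (simp add: bv_def)
  have Hb: "f dvd (H *\<^sub>v bv) $ i" if i: "i < N" for i
  proof -
    have "(H *\<^sub>v bv) $ i = (\<Sum>j<N. H $$ (i,j) * b j)"
      using H i by (auto simp: scalar_prod_def bv_def lessThan_atLeast0 intro!: sum.cong)
    also have "\<dots> = (\<Sum>j<N. (if i = j then h * b j else 0) - Polynomial.smult (M i j) (b j))"
      using i by (intro sum.cong) (auto simp: Hij algebra_simps)
    also have "\<dots> = (\<Sum>j<N. (if i = j then h * b j else 0)) - (\<Sum>j<N. Polynomial.smult (M i j) (b j))"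
      by (rule sum_subtractf)
    also have "\<dots> = h * b i - (\<Sum>j<N. Polynomial.smult (M i j) (b j))"
      using i by simp
    finally show ?thesis using rel[OF i] by simp
  qed
  define D where "D = adj_mat H"
  have D: "D \<in> carrier_mat N N" using adj_mat[OF H] by (simp add: D_def)
  have "(D * H) *\<^sub>v bv = D *\<^sub>v (H *\<^sub>v bv)" using D H bv by simp
  moreover have "(D * H) = det H \<cdot>\<^sub>m 1\<^sub>m N" using adj_mat[OF H] by (simp add: D_def)
  ultimately have eq: "(det H \<cdot>\<^sub>m 1\<^sub>m N) *\<^sub>v bv = D *\<^sub>v (H *\<^sub>v bv)" by simp
  have l: "((det H \<cdot>\<^sub>m 1\<^sub>m N) *\<^sub>v bv) $ 0 = det H"
  proof -
    have "((det H \<cdot>\<^sub>m 1\<^sub>m N) *\<^sub>v bv) $ 0 = (\<Sum>i<N. det H * (if i = 0 then 1 else 0) * b i)"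
      using N by (simp add: scalar_prod_def bv_def lessThan_atLeast0[symmetric])
    also have "\<dots> = (\<Sum>i<N. (if i = 0 then det H * b i else 0))" by (intro sum.cong) auto
    also have "\<dots> = det H" using N b0 by simp
    finally show ?thesis .
  qed
  have r: "f dvd (D *\<^sub>v (H *\<^sub>v bv)) $ 0"
  proof -
    have "(D *\<^sub>v (H *\<^sub>v bv)) $ 0 = (\<Sum>k<N. D $$ (0,k) * (H *\<^sub>v bv) $ k)"
      using N D H bv by (auto simp: scalar_prod_def lessThan_atLeast0 intro!: sum.cong)
    also have "f dvd \<dots>" using Hb by (auto intro!: dvd_sum dvd_mult)
    finally show ?thesis .
  qed
  have "f dvd det H" using eq l r by simp
  then have "f dvd poly (map_poly (\<lambda>c. [:c:]) p) h"
    using dH by (simp add: \<phi>_def pcompose_altdef)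
  then show ?thesis using lc pR by (auto simp: RP_def)
qed


definition fdeg :: "'k::field poly fract \<Rightarrow> int" where
  "fdeg c = (THE k. \<exists>u w. u \<noteq> 0 \<and> w \<noteq> 0 \<and> c = Fract u w \<and> k = int (degree u) - int (degree w))"

lemma fdeg_Fract:
  fixes u w :: "'k::field poly"
  assumes "u \<noteq> 0" "w \<noteq> 0"
  shows "fdeg (Fract u w) = int (degree u) - int (degree w)"
  unfolding fdeg_def
proof (rule the_equality)
  show "\<exists>u' w'. u' \<noteq> 0 \<and> w' \<noteq> 0 \<and> Fract u w = Fract u' w' \<and>
      int (degree u) - int (degree w) = int (degree u') - int (degree w')"
    using assms by blast
next
  fix k assume "\<exists>u' w'. u' \<noteq> 0 \<and> w' \<noteq> 0 \<and> Fract u w = Fract u' w' \<and> k = int (degree u') - int (degree w')"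
  then obtain u' w' where h: "u' \<noteq> 0" "w' \<noteq> 0" "Fract u w = Fract u' w'" "k = int (degree u') - int (degree w')"
    by blast
  have "u * w' = u' * w" using h assms by (simp add: eq_fract)
  then have "degree (u * w') = degree (u' * w)" by simp
  then have "degree u + degree w' = degree u' + degree w" using h assms by (simp add: degree_mult_eq)
  then show "k = int (degree u) - int (degree w)" using h by linarith
qed

lemma fract_nz_cases:
  fixes c :: "'k::field poly fract"
  assumes "c \<noteq> 0"
  obtains u w where "c = Fract u w" "u \<noteq> 0" "w \<noteq> 0"
  using assms by (cases c rule: Fract_cases_nonzero) auto

lemma fdeg_mult:
  fixes c d :: "'k::field poly fract"
  assumes "c \<noteq> 0" "d \<noteq> 0"
  shows "fdeg (c * d) = fdeg c + fdeg d"
proof -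
  obtain u w where c: "c = Fract u w" "u \<noteq> 0" "w \<noteq> 0" using assms(1) fract_nz_cases by blast
  obtain u' w' where d: "d = Fract u' w'" "u' \<noteq> 0" "w' \<noteq> 0" using assms(2) fract_nz_cases by blast
  show ?thesis using c d by (simp add: fdeg_Fract degree_mult_eq)
qed

lemma fdeg_add:
  fixes c d :: "'k::field poly fract"
  assumes "c \<noteq> 0" "d \<noteq> 0" "c + d \<noteq> 0"
  shows "fdeg (c + d) \<le> max (fdeg c) (fdeg d)"
proof -
  obtain u w where c: "c = Fract u w" "u \<noteq> 0" "w \<noteq> 0" using assms(1) fract_nz_cases by blast
  obtain u' w' where d: "d = Fract u' w'" "u' \<noteq> 0" "w' \<noteq> 0" using assms(2) fract_nz_cases by blast
  have s: "c + d = Fract (u * w' + u' * w) (w * w')" using c d by simp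
  have nz: "u * w' + u' * w \<noteq> 0" using assms(3) s by (auto simp: Zero_fract_def eq_fract c d)
  have "degree (u * w' + u' * w) \<le> max (degree (u * w')) (degree (u' * w))" by (rule degree_add_le_max)
  then have "int (degree (u * w' + u' * w)) \<le> max (int (degree u) + int (degree w')) (int (degree u') + int (degree w))"
    using c d by (simp add: degree_mult_eq)
  then show ?thesis using s c d nz by (simp add: fdeg_Fract degree_mult_eq)
qed

lemma fdeg_neg: "fdeg (- c) = fdeg (c :: 'k::field poly fract)"
proof (cases "c = 0")
  case False
  then obtain u w where c: "c = Fract u w" "u \<noteq> 0" "w \<noteq> 0" using fract_nz_cases by blast
  then show ?thesis by (simp add: fdeg_Fract)
qed simp

lemma fdeg_emb: "u \<noteq> 0 \<Longrightarrow> fdeg (emb u) = int (degree u)"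
  by (simp add: emb_def fdeg_Fract)

lemma fdeg_inverse: "c \<noteq> 0 \<Longrightarrow> fdeg (inverse c) = - fdeg (c :: 'k::field poly fract)"
proof -
  assume "c \<noteq> 0"
  then obtain u w where c: "c = Fract u w" "u \<noteq> 0" "w \<noteq> 0" using fract_nz_cases by blast
  then show ?thesis by (simp add: fdeg_Fract)
qed

definition Zb :: "int \<Rightarrow> 'k::field poly fract \<Rightarrow> bool" where
  "Zb K c \<longleftrightarrow> c = 0 \<or> 3 * fdeg c \<le> K"

lemma Zb_0[simp]: "Zb K 0" by (simp add: Zb_def)
lemma Zb_mono: "Zb K c \<Longrightarrow> K \<le> K' \<Longrightarrow> Zb K' c" by (auto simp: Zb_def)
lemma Zb_add: "Zb K c \<Longrightarrow> Zb K d \<Longrightarrow> Zb K (c + d)"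
  unfolding Zb_def using fdeg_add[of c d] by (cases "c = 0"; cases "d = 0"; cases "c + d = 0") auto
lemma Zb_neg: "Zb K c \<Longrightarrow> Zb K (- c)" by (simp add: Zb_def fdeg_neg)
lemma Zb_diff: "Zb K c \<Longrightarrow> Zb K d \<Longrightarrow> Zb K (c - d)"
  using Zb_add[of K c "-d"] Zb_neg[of K d] by simp
lemma Zb_mult: "Zb K1 c \<Longrightarrow> Zb K2 d \<Longrightarrow> Zb (K1 + K2) (c * d)"
  unfolding Zb_def by (cases "c = 0"; cases "d = 0") (auto simp: fdeg_mult)
lemma Zb_sum: "(\<And>i. i \<in> S \<Longrightarrow> Zb K (g i)) \<Longrightarrow> Zb K (sum g S)"
proof (induction S rule: infinite_finite_induct)
  case (insert x F) then show ?case by (simp add: Zb_add)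
qed auto
lemma Zb_emb: "degree u \<le> d \<Longrightarrow> Zb (3 * int d) (emb u)"
  unfolding Zb_def by (cases "u = 0") (auto simp: fdeg_emb emb_0)
lemma Zb_1: "Zb 0 1"
  using Zb_emb[of "1" 0] by (simp add: emb_1)
lemma Zb_inverse: "Zb K c \<Longrightarrow> 3 * fdeg c \<ge> K \<Longrightarrow> Zb (- K) (inverse c)"
  unfolding Zb_def by (cases "c = 0") (auto simp: fdeg_inverse)
lemma Zb_round: "Zb K c \<Longrightarrow> K < 3 \<Longrightarrow> Zb 0 c"
  unfolding Zb_def by auto

lemma xfun_nz: "(xfun :: 'k::field poly fract) \<noteq> 0"
  by (simp add: xfun_def emb_eq_0)

lemma fdeg_xfun_pow: "fdeg ((xfun :: 'k::field poly fract) ^ j) = int j"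
proof -
  have "(xfun :: 'k poly fract) ^ j = emb ([:0,1:] ^ j)" by (simp add: xfun_def hom_distribs)
  then show ?thesis by (simp add: fdeg_emb degree_power_eq)
qed

lemma Zb_xpow: "Zb (3 * int j) ((xfun :: 'k::field poly fract) ^ j)"
  by (simp add: Zb_def fdeg_xfun_pow)

lemma Zb_inv_xpow: "Zb (- 3 * int j) (inverse ((xfun :: 'k::field poly fract) ^ j))"
  using Zb_inverse[OF Zb_xpow[of j]] by (simp add: fdeg_xfun_pow)

lemma O_inf_Zb: "c \<in> O_inf \<longleftrightarrow> Zb 0 (c :: 'k::field poly fract)"
proof
  assume "c \<in> O_inf"
  then obtain u w where h: "w \<noteq> 0" "degree u \<le> degree w" "c = Fract u w" by (auto simp: O_inf_def)
  show "Zb 0 c"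
  proof (cases "u = 0")
    case True then show ?thesis using h by (simp add: Zb_def fract_collapse)
  next
    case False then show ?thesis using h by (simp add: Zb_def fdeg_Fract)
  qed
next
  assume z: "Zb 0 c"
  show "c \<in> O_inf"
  proof (cases "c = 0")
    case True
    then show ?thesis unfolding O_inf_def by (intro CollectI exI[of _ 0] exI[of _ 1]) (simp add: Zero_fract_def)
  next
    case False
    then obtain u w where c: "c = Fract u w" "u \<noteq> 0" "w \<noteq> 0" using fract_nz_cases by blast
    then have "degree u \<le> degree w" using z False by (simp add: Zb_def fdeg_Fract)
    then show ?thesis using c unfolding O_inf_def by blast
  qed
qed

lemma subr_O_inf: "subr (O_inf :: 'k::field poly fract set)"
  by unfold_locales
     (auto simp: O_inf_Zb Zb_1 Zb_add Zb_neg dest: Zb_mult[of 0 _ 0])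

lemma subr_range_emb: "subr (range (emb :: 'k::field poly \<Rightarrow> _))"
proof unfold_locales
  show "0 \<in> range (emb :: 'k::field poly \<Rightarrow> _)" by (metis emb_0 rangeI)
  show "1 \<in> range (emb :: 'k::field poly \<Rightarrow> _)" by (metis emb_1 rangeI)
  fix x y :: "'k poly fract" assume "x \<in> range emb" "y \<in> range emb"
  then show "x + y \<in> range emb" "x * y \<in> range emb" by (auto, metis emb_add rangeI, metis emb_mult rangeI)
next
  fix x :: "'k poly fract" assume "x \<in> range emb"
  then show "- x \<in> range emb" by (auto, metis emb_hom.hom_uminus rangeI)
qed

definition PB :: "int \<Rightarrow> 'k::field poly fract poly \<Rightarrow> bool" where
  "PB N v \<longleftrightarrow> (\<forall>l. Zb (N - 2 * int l) (coeff v l))"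

lemma PB_mono: "PB N v \<Longrightarrow> N \<le> N' \<Longrightarrow> PB N' v"
  unfolding PB_def by (auto intro: Zb_mono)
lemma PB_0[simp]: "PB N 0" by (simp add: PB_def)
lemma PB_add: "PB N v \<Longrightarrow> PB N w \<Longrightarrow> PB N (v + w)"
  unfolding PB_def by (auto intro: Zb_add)
lemma PB_neg: "PB N v \<Longrightarrow> PB N (- v)"
  unfolding PB_def by (auto intro: Zb_neg)
lemma PB_diff: "PB N v \<Longrightarrow> PB N w \<Longrightarrow> PB N (v - w)"
  unfolding PB_def by (auto intro: Zb_diff)
lemma PB_mult: "PB N1 v \<Longrightarrow> PB N2 w \<Longrightarrow> PB (N1 + N2) (v * w)"
  unfolding PB_def
proof (intro allI)
  fix l assume v: "\<forall>l. Zb (N1 - 2 * int l) (coeff v l)" and w: "\<forall>l. Zb (N2 - 2 * int l) (coeff w l)"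
  show "Zb (N1 + N2 - 2 * int l) (coeff (v * w) l)"
    unfolding coeff_mult
  proof (rule Zb_sum)
    fix i assume "i \<in> {..l}"
    then have il: "i \<le> l" by simp
    have "Zb ((N1 - 2 * int i) + (N2 - 2 * int (l - i))) (coeff v i * coeff w (l - i))"
      using v w by (intro Zb_mult) auto
    moreover have "(N1 - 2 * int i) + (N2 - 2 * int (l - i)) = N1 + N2 - 2 * int l" using il by simp
    ultimately show "Zb (N1 + N2 - 2 * int l) (coeff v i * coeff w (l - i))" by metis
  qed
qed
lemma PB_smult: "Zb K c \<Longrightarrow> PB N v \<Longrightarrow> PB (K + N) (Polynomial.smult c v)"
  unfolding PB_def
proof (intro allI)
  fix l assume "Zb K c" "\<forall>l. Zb (N - 2 * int l) (coeff v l)"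
  then have "Zb (K + (N - 2 * int l)) (c * coeff v l)" by (intro Zb_mult) auto
  then show "Zb (K + N - 2 * int l) (coeff (Polynomial.smult c v) l)" by (simp add: add_diff_eq)
qed
lemma PB_const: "Zb K c \<Longrightarrow> PB K [:c:]"
  unfolding PB_def by (auto simp: coeff_pCons split: nat.splits intro: Zb_mono)
lemma PB_monom: "Zb (N - 2 * int n) c \<Longrightarrow> PB N (monom c n)"
  unfolding PB_def by (auto simp: coeff_monom)
lemma PB_1: "PB 0 1"
  using PB_const[OF Zb_1] by (simp add: one_pCons)
lemma PB_sum: "(\<And>i. i \<in> S \<Longrightarrow> PB N (g i)) \<Longrightarrow> PB N (sum g S)"
proof (induction S rule: infinite_finite_induct)
  case (insert x F) then show ?case by (simp add: PB_add)
qed auto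
lemma PB_power: "PB N v \<Longrightarrow> PB (int k * N) (v ^ k)"
proof (induction k)
  case 0 then show ?case using PB_1 by simp
next
  case (Suc k) then show ?case using PB_mult[of N v "int k * N" "v ^ k"] by (simp add: algebra_simps)
qed


fun ccdd :: "'k::field \<Rightarrow> 'k \<Rightarrow> nat \<Rightarrow> 'k poly poly \<times> 'k poly poly" where
  "ccdd om b 0 = (1, 0)"
| "ccdd om b (Suc k) = (- [:[:om:]:] * fst (ccdd om b k) - [:0, [:inverse b:]:] * snd (ccdd om b k),
      fst (ccdd om b k) + [:[:om ^ 2:]:] * snd (ccdd om b k))"

lemma const_poly_power: "[:c:] ^ n = [:c ^ n:]"
  by (induction n) (auto simp: one_pCons mult.commute)

lemma quad_fact: "(s - x) * (s - y) = s ^ 2 - (x + y) * s + x * (y::'a::comm_ring_1)"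
  by (simp add: algebra_simps power2_eq_square)

lemma eq0_shift: "x + 1 = (0::'a::ring_1) \<Longrightarrow> x = -1"
  by (simp add: eq_neg_iff_add_eq_0)

locale X3 =
  fixes q p e :: nat and a b :: "'k::field"
  assumes prime_p: "prime p" and e1: "e \<ge> 1" and qd: "q = p ^ e" and chr: "CHAR('k) = p"
    and q3: "q mod 3 = 2" and a0: "a \<noteq> 0"
    and onc: "b ^ (q + 1) + a ^ (2 * mm q) + a ^ (mm q) = 0"
    and nm1: "a ^ (mm q) \<noteq> -1"
    and alpha: "(a ^ mm q / (1 + a ^ mm q)) ^ 2 - a ^ mm q / (1 + a ^ mm q) + 1 = 0"
begin

abbreviation "m \<equiv> mm q"
definition "om = a ^ m"

lemma m3: "3 * m = q + 1" unfolding mm_def using q3 by presburger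
lemma qpos: "q > 0" using qd prime_p by (simp add: prime_gt_0_nat)
lemma char_prime: "prime CHAR('k)" using chr prime_p by simp
lemma q_char: "q = CHAR('k) ^ e" using chr qd by simp
lemma of_nat_q: "(of_nat q :: 'k) = 0"
proof -
  have "CHAR('k) dvd q" using q_char e1 by (simp add: dvd_power)
  then show ?thesis by (simp add: of_nat_eq_0_iff_char_dvd)
qed
lemma m_unit: "3 * (of_nat m :: 'k) = 1"
proof -
  have "(of_nat (3 * m) :: 'k) = of_nat (q + 1)" using m3 by simp
  then show ?thesis using of_nat_q by simp
qed
lemma m_nz: "(of_nat m :: 'k) \<noteq> 0" using m_unit by auto
lemma three_nz: "(3 :: 'k) \<noteq> 0" using m_unit by auto

lemma om_eq: "om ^ 2 + om + 1 = 0"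
proof -
  have d: "1 + om \<noteq> 0" using nm1 unfolding om_def by (metis add_eq_0_iff)
  define r where "r = om / (1 + om)"
  have r1: "r ^ 2 - r + 1 = 0" using alpha by (simp add: om_def r_def)
  have r2: "r * (1 + om) = om" using d by (simp add: r_def)
  have "(1 + om) ^ 2 * (r ^ 2 - r + 1) = (r * (1 + om)) ^ 2 - (r * (1 + om)) * (1 + om) + (1 + om) ^ 2"
    by (simp add: algebra_simps power2_eq_square)
  also have "\<dots> = om ^ 2 + om + 1" unfolding r2 by (simp add: algebra_simps power2_eq_square)
  finally show ?thesis using r1 by simp
qed

lemma om3: "om ^ 3 = 1"
proof -
  have "om ^ 3 - 1 = (om - 1) * (om ^ 2 + om + 1)" by (simp add: algebra_simps power2_eq_square power3_eq_cube)
  then show ?thesis using om_eq by simp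
qed

lemma om_nz: "om \<noteq> 0" using om3 by auto
lemma om_ne1: "om \<noteq> 1"
proof
  assume "om = 1" then have "(3::'k) = 0" using om_eq by simp
  then show False using three_nz by simp
qed
lemma om_ne_om2: "om \<noteq> om ^ 2"
proof
  assume "om = om ^ 2" then have "om * 1 = om * om" by (simp add: power2_eq_square)
  then have "om = 1" using om_nz by (metis mult_left_cancel)
  then show False using om_ne1 by simp
qed

lemma a_q1: "a ^ (q + 1) = 1"
proof -
  have "a ^ (q + 1) = (a ^ m) ^ 3" using m3 by (simp add: power_mult[symmetric] mult.commute)
  then show ?thesis using om3 by (simp add: om_def)
qed

lemma b_q1: "b ^ (q + 1) = 1"
proof -
  have "a ^ (2 * m) = om ^ 2" by (simp add: om_def power_mult mult.commute)
  then have "b ^ (q + 1) + om ^ 2 + om = 0" using onc by (simp add: om_def)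
  moreover have "om ^ 2 + om = -1" using om_eq by (intro eq0_shift) simp
  ultimately have "b ^ (q + 1) + (-1) = 0" by (simp add: add.assoc)
  then show ?thesis by simp
qed

lemma b0: "b \<noteq> 0" using b_q1 by auto

lemma inv_a: "inverse a = a ^ q"
  using a_q1 by (metis inverse_unique power_Suc Suc_eq_plus1)
lemma inv_b: "inverse b = b ^ q"
  using b_q1 by (metis inverse_unique power_Suc Suc_eq_plus1)

lemma frob1: "(u - v) ^ q = u ^ q - (v :: 'k poly) ^ q"
  by (rule frob_diff[where e = e]) (simp_all add: char_prime q_char)
lemma frob2: "(u - v) ^ q = u ^ q - (v :: 'k poly poly) ^ q"
  by (rule frob_diff[where e = e]) (simp_all add: char_prime q_char)

definition "Xp = ([:0, 1:] :: 'k poly)"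
definition "Tp = ([:- a, 1:] :: 'k poly)"
definition "Sp = Xp ^ m"
definition "S0 = (\<Sum>i<m. [:a:] ^ (m - Suc i) * Xp ^ i)"

lemma S_om: "Sp - [:om:] = Tp * S0"
proof -
  have "Xp ^ m - [:a:] ^ m = (Xp - [:a:]) * S0" unfolding S0_def by (rule power_diff_sumr2)
  moreover have "Xp - [:a:] = Tp" by (simp add: Xp_def Tp_def)
  ultimately show ?thesis by (simp add: Sp_def om_def const_poly_power)
qed

lemma S0_a: "poly S0 a = of_nat m * a ^ (m - 1)"
proof -
  have "poly S0 a = (\<Sum>i<m. a ^ (m - Suc i) * a ^ i)" by (simp add: S0_def poly_sum Xp_def const_poly_power)
  also have "\<dots> = (\<Sum>i<m. a ^ (m - 1))" by (intro sum.cong refl) (simp add: power_add[symmetric])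
  finally show ?thesis by simp
qed

lemma S0_a_nz: "poly S0 a \<noteq> 0" using S0_a m_nz a0 by simp

lemma P2: "Polynomial.smult (inverse a) Xp - Sp ^ 3 = - (Xp * Tp ^ q)"
proof -
  have "Tp ^ q = (Xp - [:a:]) ^ q" by (simp add: Xp_def Tp_def)
  also have "\<dots> = Xp ^ q - [:a ^ q:]" by (simp add: frob1 const_poly_power)
  finally have t: "Tp ^ q = Xp ^ q - [:a ^ q:]" .
  have s: "Sp ^ 3 = Xp * Xp ^ q" using m3 by (simp add: Sp_def power_mult[symmetric] mult.commute)
  show ?thesis by (simp add: t s inv_a algebra_simps)
qed

definition "E0 = (SOME E. Sp ^ 2 + Sp + 1 = Tp * E)"

lemma E0: "Sp ^ 2 + Sp + 1 = Tp * E0"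
proof -
  have "poly (Sp ^ 2 + Sp + 1) a = om ^ 2 + om + 1" by (simp add: Sp_def Xp_def om_def)
  then have "poly (Sp ^ 2 + Sp + 1) a = 0" using om_eq by simp
  then have "Tp dvd Sp ^ 2 + Sp + 1" by (metis Tp_def poly_eq_0_iff_dvd)
  then obtain E where "Sp ^ 2 + Sp + 1 = Tp * E" by (elim dvdE)
  then show ?thesis unfolding E0_def by (rule someI)
qed

lemma S_fact: "Sp ^ 2 + Sp + 1 = (Sp - [:om:]) * (Sp - [:om ^ 2:])"
proof -
  have "om + om ^ 2 = -1" using om_eq by (intro eq0_shift) (simp add: algebra_simps)
  then have h1: "[:om:] + [:om ^ 2:] = (-1 :: 'k poly)" by (simp add: one_pCons)
  have h2: "[:om:] * [:om ^ 2:] = (1 :: 'k poly)" using om3 by (simp add: power3_eq_cube power2_eq_square mult.assoc one_pCons)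
  show ?thesis unfolding quad_fact h1 h2 by simp
qed

end


lemma step_id:
  fixes s o1 c d :: "'a::comm_ring_1"
  shows "(- o1 * c - (- (s ^ 2 + s)) * d) + s * (c + (- 1 - o1) * d) = (s - o1) * (c + s * d)"
  by (simp add: algebra_simps power2_eq_square)

lemma main_alg:
  fixes yd h t1 p1 bc yv z f gq fq1 t2 eq :: "'a::comm_ring_1"
  assumes "z * gq = f * fq1 - t1 * t2 * eq"
  shows "gq * ((- bc * yv * z + bc * f) * h + t1 * p1) = t1 * (gq * p1 + bc * yv * t2 * eq * h) + f * (bc * gq * h - bc * yv * fq1 * h)"
proof -
  have "gq * ((- bc * yv * z + bc * f) * h + t1 * p1) = gq * t1 * p1 - bc * yv * (z * gq) * h + bc * f * gq * h"
    by (simp add: algebra_simps)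
  also have "\<dots> = gq * t1 * p1 - bc * yv * (f * fq1 - t1 * t2 * eq) * h + bc * f * gq * h"
    by (simp only: assms)
  also have "\<dots> = t1 * (gq * p1 + bc * yv * t2 * eq * h) + f * (bc * gq * h - bc * yv * fq1 * h)"
    by (simp add: algebra_simps)
  finally show ?thesis .
qed

context X3
begin

definition "Yv = ([:0, 1:] :: 'k poly poly)"
definition "Bc = ([:[:b:]:] :: 'k poly poly)"
definition "f0 = (monom 1 (q + 1) + [:Xp ^ (2 * m) + Xp ^ m:] :: 'k poly poly)"

lemma monom_Yv: "monom 1 n = Yv ^ n"
  by (metis Yv_def x_as_monom x_pow_n)

lemma f0_alt: "f0 = Yv ^ (q + 1) + [:Xp ^ (2 * m) + Xp ^ m:]"
  by (simp add: f0_def monom_Yv)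

lemma lift2_f0: "lift2 f0 = curve_poly q"
  by (simp add: f0_def curve_poly_def hom_distribs lift2_monom lift2_const emb_1 xfun_def Xp_def)

lemma ev_f0: "ev2 f0 a b = 0"
proof -
  interpret evh: comm_ring_hom "\<lambda>w. ev2 w a b" by (rule ev2_hom)
  have "ev2 f0 a b = ev2 Yv a b ^ (q + 1) + ev2 [:Xp ^ (2 * m) + Xp ^ m:] a b"
    unfolding f0_alt by (simp only: evh.hom_add evh.hom_power)
  also have "\<dots> = b ^ (q + 1) + (a ^ (2 * m) + a ^ m)"
    unfolding Yv_def ev2_X ev2_const by (simp add: Xp_def)
  finally have "ev2 f0 a b = b ^ (q + 1) + (a ^ (2 * m) + a ^ m)" .
  then show ?thesis using onc by (simp add: add.assoc)
qed

lemma deg_f0: "degree f0 = q + 1"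
  unfolding f0_def by (subst degree_add_eq_left) (auto simp: degree_monom_eq)

lemma lc_f0: "lead_coeff f0 = 1"
  using deg_f0 by (simp add: f0_def)

lemma deg_curve: "degree (curve_poly q :: 'k poly fract poly) = q + 1"
  using deg_f0 by (simp add: lift2_f0[symmetric] lift2_def)

definition "GG = (\<Sum>i<q+1. Bc ^ (q + 1 - Suc i) * Yv ^ i)"

lemma Bc_pow: "Bc ^ k = [:[:b ^ k:]:]"
  by (simp add: Bc_def const_poly_power)

lemma Bc_q1: "Bc ^ (q + 1) = 1"
  unfolding Bc_pow b_q1 by (simp add: one_pCons)

lemma G_rel: "(Yv - Bc) * GG = f0 - [:Tp:] * [:E0:]"
proof -
  have "Yv ^ (q + 1) - Bc ^ (q + 1) = (Yv - Bc) * GG" unfolding GG_def by (rule power_diff_sumr2)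
  moreover have "[:Tp:] * [:E0:] = [:Xp ^ (2 * m) + Xp ^ m:] + 1"
  proof -
    have "[:Tp:] * [:E0:] = [:Tp * E0:]" by simp
    also have "\<dots> = [:Sp ^ 2 + Sp + 1:]" by (simp add: E0)
    also have "Sp ^ 2 = Xp ^ (2 * m)" by (simp add: Sp_def power_mult[symmetric] mult.commute)
    finally show ?thesis by (simp add: Sp_def one_pCons)
  qed
  moreover have "Bc * Bc ^ q = 1" using Bc_q1 by simp
  ultimately show ?thesis by (simp add: f0_alt)
qed

lemma ev_G: "ev2 GG a b = b ^ q"
proof -
  interpret evh: comm_ring_hom "\<lambda>w. ev2 w a b" by (rule ev2_hom)
  have "ev2 GG a b = (\<Sum>i<q+1. b ^ (q + 1 - Suc i) * b ^ i)"
    by (simp add: GG_def hom_distribs Bc_def Yv_def ev2_X ev2_const)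
  also have "\<dots> = (\<Sum>i<q+1. b ^ q)" by (intro sum.cong refl) (simp add: power_add[symmetric])
  also have "\<dots> = of_nat (q + 1) * b ^ q" by simp
  finally show ?thesis using of_nat_q by simp
qed

definition "y0 = - Polynomial.smult b (Sp ^ 2 + Sp)"

lemma Y_y0: "Yv - [:y0:] = - Bc * Yv * (Yv - Bc) ^ q + Bc * f0"
proof -
  define C where "C = ([:Xp ^ (2 * m) + Xp ^ m:] :: 'k poly poly)"
  have e1: "Bc * Bc ^ q = 1" using Bc_q1 by simp
  have e2: "(Yv - Bc) ^ q = Yv ^ q - Bc ^ q" by (rule frob2)
  have e3: "[:y0:] = - (Bc * C)"
  proof -
    have "Sp ^ 2 + Sp = Xp ^ (2 * m) + Xp ^ m" by (simp add: Sp_def power_mult[symmetric] mult.commute)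
    then show ?thesis by (simp add: y0_def C_def Bc_def)
  qed
  have "- Bc * Yv * (Yv - Bc) ^ q + Bc * f0 = Yv * (Bc * Bc ^ q) + Bc * C"
    unfolding e2 f0_alt C_def[symmetric] by (simp add: algebra_simps)
  also have "\<dots> = Yv - [:y0:]" using e1 e3 by simp
  finally show ?thesis by simp
qed

definition "cc k = fst (ccdd om b k)"
definition "dd k = snd (ccdd om b k)"
definition "Yp = ([:0, [:inverse b:]:] :: 'k poly poly)"

lemma cc_0: "cc 0 = 1" and dd_0: "dd 0 = 0" by (simp_all add: cc_def dd_def)
lemma cc_Suc: "cc (Suc k) = - [:[:om:]:] * cc k - Yp * dd k"
  by (simp add: cc_def dd_def Yp_def)
lemma dd_Suc: "dd (Suc k) = cc k + [:[:om ^ 2:]:] * dd k"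
  by (simp add: cc_def dd_def)

lemma poly_Yp: "poly Yp y0 = - (Sp ^ 2 + Sp)"
  using b0 by (simp add: Yp_def y0_def)

lemma om2_poly: "[:om ^ 2:] = - 1 - ([:om:] :: 'k poly)"
proof -
  have "om ^ 2 = -1 - om" using om_eq by (simp add: algebra_simps eq_neg_iff_add_eq_0)
  then show ?thesis by (simp add: one_pCons)
qed

lemma ccdd_eval: "poly (cc k) y0 + Sp * poly (dd k) y0 = (Sp - [:om:]) ^ k"
proof (induction k)
  case 0 then show ?case by (simp add: cc_0 dd_0)
next
  case (Suc k)
  have "poly (cc (Suc k)) y0 + Sp * poly (dd (Suc k)) y0 =
      (- [:om:] * poly (cc k) y0 - poly Yp y0 * poly (dd k) y0) + Sp * (poly (cc k) y0 + [:om ^ 2:] * poly (dd k) y0)"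
    by (simp add: cc_Suc dd_Suc)
  also have "\<dots> = (Sp - [:om:]) * (poly (cc k) y0 + Sp * poly (dd k) y0)"
    unfolding poly_Yp om2_poly by (rule step_id)
  finally show ?case using Suc by simp
qed

end


lemma ev2_smult: "ev2 (Polynomial.smult c p) a b = poly c a * ev2 p a b"
proof -
  interpret evh: comm_ring_hom "\<lambda>w. ev2 w a b" by (rule ev2_hom)
  have "Polynomial.smult c p = [:c:] * p" by simp
  then have "ev2 (Polynomial.smult c p) a b = ev2 [:c:] a b * ev2 p a b" by (simp only: evh.hom_mult)
  then show ?thesis by (simp add: ev2_const)
qed

lemma lift2_smult: "lift2 (Polynomial.smult c p) = Polynomial.smult (emb c) (lift2 p)"
proof -
  have "Polynomial.smult c p = [:c:] * p" by simp
  then have "lift2 (Polynomial.smult c p) = lift2 [:c:] * lift2 p" by (simp only: lift2h.hom_mult)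
  then show ?thesis by (simp add: lift2_const)
qed

lemma key_alg:
  fixes t W w2 h2 u2 U :: "'a::comm_ring_1"
  shows "- (t * W) * (w2 * h2 - u2) + w2 * (W * (t * h2) - U) = W * t * u2 - w2 * U"
  by (simp add: algebra_simps)

lemma e1_alg:
  fixes s c d xa :: "'a::comm_ring_1"
  shows "(1 - (- (s ^ 2 + s))) * c + (xa - (- (s ^ 2 + s))) * d = (s ^ 2 + s + 1) * (c + s * d) + (xa - s ^ 3) * d"
  by (simp add: algebra_simps power2_eq_square power3_eq_cube)

lemma pe_alg:
  fixes A1 A2 s1 s2 t1 S1 Tq t2 x d :: "'a::comm_ring_1"
  assumes h1: "A1 = s1 * A2" and h2: "A1 = t1 * S1" and h3: "Tq = t1 * t2"
  shows "(s1 * s2) * A2 + (- (x * Tq)) * d = t1 * (S1 * s2 - x * t2 * d)"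
proof -
  have a: "(s1 * s2) * A2 = t1 * S1 * s2"
  proof -
    have "(s1 * s2) * A2 = s2 * (s1 * A2)" by (simp add: algebra_simps)
    also have "\<dots> = s2 * A1" using h1 by simp
    also have "\<dots> = t1 * S1 * s2" using h2 by (simp add: algebra_simps)
    finally show ?thesis .
  qed
  show ?thesis unfolding a h3 by (simp add: algebra_simps)
qed

context X3
begin

definition "Xa = Polynomial.smult (inverse a) Xp"
definition "g0 n = (1 - Yp) * cc (n - 2) + ([:Xa:] - Yp) * dd (n - 2)"
definition "Cn n = poly (cc (n - 2)) y0"
definition "Dn n = poly (dd (n - 2)) y0"
definition "P1 n = S0 ^ (n - 1) * (Sp - [:om ^ 2:]) - Xp * Tp ^ (q - (n - 1)) * Dn n"

lemma P_eval:
  assumes n2: "2 \<le> n" and nq: "n - 1 \<le> q"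
  shows "poly (g0 n) y0 = Tp ^ (n - 1) * P1 n"
proof -
  have "poly (g0 n) y0 = (1 - poly Yp y0) * Cn n + (Xa - poly Yp y0) * Dn n"
    by (simp add: g0_def Cn_def Dn_def)
  also have "\<dots> = (Sp ^ 2 + Sp + 1) * (Cn n + Sp * Dn n) + (Xa - Sp ^ 3) * Dn n"
    unfolding poly_Yp by (rule e1_alg)
  also have "\<dots> = ((Sp - [:om:]) * (Sp - [:om ^ 2:])) * (Sp - [:om:]) ^ (n - 2) + (- (Xp * Tp ^ q)) * Dn n"
    unfolding S_fact using P2 by (simp add: Xa_def Cn_def Dn_def ccdd_eval)
  also have "\<dots> = Tp ^ (n - 1) * (S0 ^ (n - 1) * (Sp - [:om ^ 2:]) - Xp * Tp ^ (q - (n - 1)) * Dn n)"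
  proof (rule pe_alg)
    have "n - 1 = Suc (n - 2)" using n2 by simp
    then show "(Sp - [:om:]) ^ (n - 1) = (Sp - [:om:]) * (Sp - [:om:]) ^ (n - 2)" by simp
    show "(Sp - [:om:]) ^ (n - 1) = Tp ^ (n - 1) * S0 ^ (n - 1)" by (simp add: S_om power_mult_distrib)
    show "Tp ^ q = Tp ^ (n - 1) * Tp ^ (q - (n - 1))" using nq by (simp add: power_add[symmetric])
  qed
  finally show ?thesis by (simp add: P1_def)
qed

lemma poly_Sp_a: "poly Sp a = om" by (simp add: Sp_def Xp_def om_def)
lemma poly_Tp_a: "poly Tp a = 0" by (simp add: Tp_def)

lemma P1_a:
  assumes n2: "2 \<le> n" and nq: "n - 1 < q"
  shows "poly (P1 n) a \<noteq> 0"
proof -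
  have "poly (P1 n) a = (poly S0 a) ^ (n - 1) * (om - om ^ 2)"
    using nq by (simp add: P1_def poly_Sp_a poly_Tp_a)
  moreover have "om - om ^ 2 \<noteq> 0" using om_ne_om2 by simp
  ultimately show ?thesis using S0_a_nz by simp
qed

definition "HH n = synthetic_div (g0 n) y0"

lemma g0_split: "g0 n = (Yv - [:y0:]) * HH n + [:poly (g0 n) y0:]"
proof -
  have "[:- y0, 1:] = Yv - [:y0:]" by (simp add: Yv_def)
  then show ?thesis using synthetic_div_correct'[of y0 "g0 n"] by (simp add: HH_def)
qed

definition "UU n = GG ^ q * [:P1 n:] + Bc * Yv * [:Tp ^ (q - (n - 1)):] * [:E0:] ^ q * HH n"
definition "VV n = Bc * GG ^ q * HH n - Bc * Yv * f0 ^ (q - 1) * HH n"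

lemma main_id:
  assumes n2: "2 \<le> n" and nq: "n - 1 < q"
  shows "GG ^ q * g0 n = [:Tp ^ (n - 1):] * UU n + f0 * VV n"
proof -
  have g: "g0 n = (- Bc * Yv * (Yv - Bc) ^ q + Bc * f0) * HH n + [:Tp ^ (n - 1):] * [:P1 n:]"
  proof -
    have nq': "n - 1 \<le> q" using nq by simp
    have c: "[:Tp ^ (n - 1) * P1 n:] = [:Tp ^ (n - 1):] * [:P1 n:]" by simp
    show ?thesis using g0_split[of n] unfolding P_eval[OF n2 nq'] Y_y0 c .
  qed
  have z: "(Yv - Bc) ^ q * GG ^ q = f0 * f0 ^ (q - 1) - [:Tp ^ (n - 1):] * [:Tp ^ (q - (n - 1)):] * [:E0:] ^ q"
  proof -
    have "(Yv - Bc) ^ q * GG ^ q = ((Yv - Bc) * GG) ^ q" by (simp add: power_mult_distrib)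
    also have "\<dots> = f0 ^ q - ([:Tp:] * [:E0:]) ^ q" unfolding G_rel by (rule frob2)
    also have "f0 ^ q = f0 * f0 ^ (q - 1)" using qpos by (simp add: power_Suc[symmetric])
    also have "([:Tp:] * [:E0:]) ^ q = [:Tp ^ (n - 1):] * [:Tp ^ (q - (n - 1)):] * [:E0:] ^ q"
    proof -
      have eq: "[:Tp:] ^ q = [:Tp ^ (n - 1):] * [:Tp ^ (q - (n - 1)):]"
        using nq by (simp add: const_poly_power power_add[symmetric])
      have "([:Tp:] * [:E0:]) ^ q = [:Tp:] ^ q * [:E0:] ^ q" by (rule power_mult_distrib)
      also have "\<dots> = [:Tp ^ (n - 1):] * [:Tp ^ (q - (n - 1)):] * [:E0:] ^ q" by (simp only: eq)
      finally show ?thesis .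
    qed
    finally show ?thesis .
  qed
  show ?thesis unfolding g UU_def VV_def by (rule main_alg[OF z])
qed

lemma ev_Gq: "ev2 (GG ^ q) a b \<noteq> 0"
proof -
  interpret evh: comm_ring_hom "\<lambda>w. ev2 w a b" by (rule ev2_hom)
  show ?thesis using ev_G b0 by (simp add: evh.hom_power)
qed

lemma ev_U:
  assumes n2: "2 \<le> n" and nq: "n - 1 < q"
  shows "ev2 (UU n) a b \<noteq> 0"
proof -
  interpret evh: comm_ring_hom "\<lambda>w. ev2 w a b" by (rule ev2_hom)
  have "ev2 (UU n) a b = ev2 (GG ^ q) a b * poly (P1 n) a"
    using nq by (simp add: UU_def hom_distribs ev2_const poly_Tp_a ev2_smult)
  then show ?thesis using ev_Gq P1_a[OF n2 nq] by simp
qed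

lemma ev_zero:
  assumes "curve_poly q dvd lift2 Hh"
  shows "ev2 Hh a b = 0"
proof -
  interpret evh: comm_ring_hom "\<lambda>w. ev2 w a b" by (rule ev2_hom)
  obtain Qt R where QR: "Hh = Qt * f0 + R" "degree R < degree f0"
    using monic_div[OF lc_f0] deg_f0 by fastforce
  have "lift2 Hh = lift2 Qt * curve_poly q + lift2 R" using QR(1) by (simp add: hom_distribs lift2_f0)
  then have "curve_poly q dvd lift2 Qt * curve_poly q + lift2 R" using assms by simp
  then have dv: "curve_poly q dvd lift2 R" using dvd_add_right_iff[of "curve_poly q" "lift2 Qt * curve_poly q" "lift2 R"] by simp
  have "lift2 R = 0"
  proof (rule ccontr)
    assume nz: "lift2 R \<noteq> 0"
    have "degree (curve_poly q :: 'k poly fract poly) \<le> degree (lift2 R)" by (rule dvd_imp_degree_le[OF dv nz])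
    moreover have "degree (lift2 R) = degree R" by (simp add: lift2_def)
    ultimately show False using QR(2) deg_f0 deg_curve by simp
  qed
  then have "R = 0" by simp
  then show ?thesis using QR(1) ev_f0 by (simp add: hom_distribs)
qed

definition "tt = (emb [:- a, 1:] :: 'k poly fract)"
lemma tt_nz: "tt \<noteq> 0" by (simp add: tt_def emb_eq_0)

lemma pos_rel:
  assumes n2: "2 \<le> n" and nq: "n - 1 < q"
  shows "curve_poly q dvd (lift2 (GG ^ q) * Polynomial.smult (inverse (tt ^ (n - 1))) (lift2 (g0 n)) - lift2 (UU n))"
proof -
  define c where "c = inverse (tt ^ (n - 1))"
  have L: "lift2 (GG ^ q) * lift2 (g0 n) = [:tt ^ (n - 1):] * lift2 (UU n) + curve_poly q * lift2 (VV n)"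
  proof -
    have "lift2 (GG ^ q * g0 n) = lift2 ([:Tp ^ (n - 1):] * UU n + f0 * VV n)" by (simp only: main_id[OF n2 nq])
    then show ?thesis by (simp add: hom_distribs lift2_const lift2_f0 tt_def Tp_def lift2_smult)
  qed
  have ct: "c * tt ^ (n - 1) = 1" using tt_nz by (simp add: c_def)
  have "lift2 (GG ^ q) * Polynomial.smult c (lift2 (g0 n)) = Polynomial.smult c (lift2 (GG ^ q) * lift2 (g0 n))"
    by simp
  also have "\<dots> = lift2 (UU n) + curve_poly q * Polynomial.smult c (lift2 (VV n))"
    unfolding L using ct by (simp add: smult_add_right)
  finally have "lift2 (GG ^ q) * Polynomial.smult c (lift2 (g0 n)) - lift2 (UU n) = curve_poly q * Polynomial.smult c (lift2 (VV n))"
    by simp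
  then show ?thesis by (metis c_def dvd_triv_left mult_smult_right)
qed

lemma loc_pos:
  assumes n2: "2 \<le> n" and nq: "n - 1 < q"
  shows "local_ring q a b (Polynomial.smult (inverse (emb [:- a, 1:] ^ (n - 1))) (lift2 (g0 n)))"
proof -
  have d: "curve_poly q dvd (lift2 (GG ^ q) * Polynomial.smult (inverse (emb [:- a, 1:] ^ (n - 1))) (lift2 (g0 n)) - lift2 (UU n))"
    using pos_rel[OF n2 nq] unfolding tt_def .
  have mo: "(lift2 (GG ^ q) * Polynomial.smult (inverse (emb [:- a, 1:] ^ (n - 1))) (lift2 (g0 n)) - lift2 (UU n)) mod curve_poly q = 0"
    by (rule dvd_imp_mod_0[OF d])
  show ?thesis unfolding local_ring_def
    by (rule exI[of _ "UU n"], rule exI[of _ "GG ^ q"], rule conjI[OF ev_Gq mo])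
qed

lemma loc_neg:
  assumes n2: "2 \<le> n" and nq: "n - 1 < q"
  shows "\<not> local_ring q a b (Polynomial.smult (inverse (emb [:- a, 1:] ^ n)) (lift2 (g0 n)))"
proof
  interpret evh: comm_ring_hom "\<lambda>w. ev2 w a b" by (rule ev2_hom)
  assume "local_ring q a b (Polynomial.smult (inverse (emb [:- a, 1:] ^ n)) (lift2 (g0 n)))"
  then obtain u2 w2 where uw: "ev2 w2 a b \<noteq> 0 \<and>
      (lift2 w2 * Polynomial.smult (inverse (emb [:- a, 1:] ^ n)) (lift2 (g0 n)) - lift2 u2) mod curve_poly q = 0"
    unfolding local_ring_def by (elim exE) (erule that)
  have uw1: "ev2 w2 a b \<noteq> 0" using uw by (rule conjunct1)
  have uw2: "(lift2 w2 * Polynomial.smult (inverse (emb [:- a, 1:] ^ n)) (lift2 (g0 n)) - lift2 u2) mod curve_poly q = 0"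
    using uw by (rule conjunct2)
  define h2 where "h2 = Polynomial.smult (inverse (tt ^ n)) (lift2 (g0 n))"
  define h1 where "h1 = Polynomial.smult (inverse (tt ^ (n - 1))) (lift2 (g0 n))"
  have d2: "curve_poly q dvd (lift2 w2 * h2 - lift2 u2)"
    using mod_0_imp_dvd[OF uw2] unfolding h2_def tt_def .
  have d1: "curve_poly q dvd (lift2 (GG ^ q) * h1 - lift2 (UU n))"
    unfolding h1_def by (rule pos_rel[OF n2 nq])
  have h12: "h1 = [:tt:] * h2"
  proof -
    have nn: "n = Suc (n - 1)" using n2 by simp
    have tn: "tt ^ n = tt * tt ^ (n - 1)" by (subst nn) (simp only: power_Suc diff_Suc_1)
    have "tt * inverse (tt ^ n) = tt * inverse tt * inverse (tt ^ (n - 1))"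
      unfolding tn by (simp only: inverse_mult_distrib mult.assoc)
    also have "\<dots> = inverse (tt ^ (n - 1))" using tt_nz by simp
    finally have "inverse (tt ^ (n - 1)) = tt * inverse (tt ^ n)" by simp
    then show ?thesis by (simp add: h1_def h2_def mult.commute)
  qed
  define W where "W = GG ^ q"
  have l: "lift2 (W * [:Tp:] * u2 - w2 * UU n) = lift2 W * [:tt:] * lift2 u2 - lift2 w2 * lift2 (UU n)"
    by (simp only: lift2h.hom_minus lift2h.hom_mult lift2_const tt_def Tp_def)
  have "curve_poly q dvd - ([:tt:] * lift2 W) * (lift2 w2 * h2 - lift2 u2) + lift2 w2 * (lift2 W * h1 - lift2 (UU n))"
    using d1 d2 unfolding W_def by (intro dvd_add dvd_mult) simp_all
  then have "curve_poly q dvd lift2 (W * [:Tp:] * u2 - w2 * UU n)"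
    unfolding l h12 key_alg .
  then have "ev2 (W * [:Tp:] * u2 - w2 * UU n) a b = 0" by (rule ev_zero)
  then have "ev2 W a b * poly Tp a * ev2 u2 a b - ev2 w2 a b * ev2 (UU n) a b = 0"
    by (simp only: evh.hom_minus evh.hom_mult ev2_const)
  then have "ev2 w2 a b * ev2 (UU n) a b = 0" by (simp add: poly_Tp_a)
  then show False using uw1 ev_U[OF n2 nq] by simp
qed

end


context X3
begin

lemma curve_monic: "lead_coeff (curve_poly q :: 'k poly fract poly) = 1"
  using lc_f0 by (simp add: lift2_f0[symmetric] lift2_def)

lemma deg_curve_ge1: "degree (curve_poly q :: 'k poly fract poly) \<ge> 1"
  using deg_curve by simp

definition ie :: "'k poly fract \<Rightarrow> 'k poly" where "ie c = (SOME d. emb d = c)"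

lemma ie_emb: "c \<in> range emb \<Longrightarrow> emb (ie c) = c"
  unfolding ie_def by (auto intro: someI)

lemma ie_0: "ie 0 = 0"
proof -
  have "emb (ie 0) = (0 :: 'k poly fract)" by (rule ie_emb) (metis emb_0 rangeI)
  then show ?thesis by (simp add: emb_eq_0)
qed

lemma integral_Kx_lift2:
  fixes G0 :: "'k poly poly"
  shows "integral_Kx q (lift2 G0)"
proof -
  have "\<forall>k. \<exists>QR. G0 * monom 1 k = fst QR * f0 + snd QR \<and> degree (snd QR) < q + 1"
  proof
    fix k
    obtain Qt R where "G0 * monom 1 k = Qt * f0 + R" "degree R < degree f0"
      using monic_div[OF lc_f0, of "G0 * monom 1 k"] deg_f0 by auto
    then show "\<exists>QR. G0 * monom 1 k = fst QR * f0 + snd QR \<and> degree (snd QR) < q + 1"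
      using deg_f0 by (intro exI[of _ "(Qt, R)"]) simp
  qed
  then have "\<exists>F. \<forall>k. G0 * monom 1 k = fst (F k) * f0 + snd (F k) \<and> degree (snd (F k)) < q + 1"
    by (rule choice)
  then obtain F where F: "\<And>k. G0 * monom 1 k = fst (F k) * f0 + snd (F k)" "\<And>k. degree (snd (F k)) < q + 1"
    by blast
  define M where "M k l = emb (coeff (snd (F k)) l)" for k l
  have "\<exists>p. lead_coeff p = 1 \<and> (\<forall>i. coeff p i \<in> range emb) \<and>
      curve_poly q dvd poly (map_poly (\<lambda>c. [:c:]) p) (lift2 G0)"
  proof (rule det_trick[OF subr_range_emb, of "q + 1" "\<lambda>k. monom 1 k" M])
    show "0 < q + 1" by simp
    show "monom 1 0 = (1 :: 'k poly fract poly)" by (simp add: one_pCons monom_0)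
    show "\<And>i j. i < q + 1 \<Longrightarrow> j < q + 1 \<Longrightarrow> M i j \<in> range emb" by (simp add: M_def)
    fix k assume "k < q + 1"
    have s: "(\<Sum>j<q + 1. Polynomial.smult (M k j) (monom 1 j)) = lift2 (snd (F k))"
    proof -
      have "(\<Sum>j<q + 1. Polynomial.smult (M k j) (monom 1 j)) = (\<Sum>j\<le>q. lift2 (monom (coeff (snd (F k)) j) j))"
        by (intro sum.cong) (auto simp: M_def lift2_monom smult_monom)
      also have "\<dots> = lift2 (\<Sum>j\<le>q. monom (coeff (snd (F k)) j) j)" by (simp add: hom_distribs)
      also have "(\<Sum>j\<le>q. monom (coeff (snd (F k)) j) j) = snd (F k)"
        by (rule poly_as_sum_of_monoms') (use F(2)[of k] in simp)
      finally show ?thesis .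
    qed
    have "lift2 G0 * monom 1 k = lift2 (fst (F k)) * curve_poly q + lift2 (snd (F k))"
    proof -
      have "lift2 G0 * monom 1 k = lift2 (G0 * monom 1 k)" by (simp add: hom_distribs lift2_monom emb_1)
      also have "\<dots> = lift2 (fst (F k)) * curve_poly q + lift2 (snd (F k))"
        unfolding F(1)[of k] by (simp add: hom_distribs lift2_f0)
      finally show ?thesis .
    qed
    then show "curve_poly q dvd lift2 G0 * monom 1 k - (\<Sum>j<q + 1. Polynomial.smult (M k j) (monom 1 j))"
      unfolding s by simp
  qed
  then obtain p where p: "lead_coeff p = 1" "\<And>i. coeff p i \<in> range emb"
      "curve_poly q dvd poly (map_poly (\<lambda>c. [:c:]) p) (lift2 G0)" by blast
  define p' where "p' = map_poly ie p"
  have pp: "map_poly emb p' = p"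
    by (rule poly_eqI) (simp add: p'_def coeff_map_poly ie_0 emb_0 ie_emb p(2))
  have "lead_coeff (map_poly emb p') = emb (lead_coeff p')" by simp
  then have "emb (lead_coeff p') = 1" using p(1) pp by simp
  then have lc: "lead_coeff p' = 1" by simp
  have "map_poly (\<lambda>c. [:emb c:]) p' = map_poly (\<lambda>c. [:c:]) (map_poly emb p')"
    by (subst map_poly_map_poly) (auto simp: emb_0 o_def)
  then have "map_poly (\<lambda>c. [:emb c:]) p' = map_poly (\<lambda>c. [:c:]) p" by (simp add: pp)
  then show ?thesis unfolding integral_Kx_def using lc p(3)
    by (intro exI[of _ p']) (simp add: dvd_imp_mod_0)
qed

lemma PB_curve: "PB (2 * int (q + 1)) (curve_poly q :: 'k poly fract poly)"
proof -
  have z1: "Zb (2 * int (q + 1) - 2 * int (q + 1)) (1 :: 'k poly fract)" using Zb_1 by simp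
  have "Zb (3 * int (2 * m)) ((xfun :: 'k poly fract) ^ (2 * m))" by (rule Zb_xpow)
  moreover have "Zb (3 * int (2 * m)) ((xfun :: 'k poly fract) ^ m)" by (rule Zb_mono[OF Zb_xpow]) simp
  ultimately have "Zb (3 * int (2 * m)) ((xfun :: 'k poly fract) ^ (2 * m) + xfun ^ m)" by (rule Zb_add)
  moreover have "3 * int (2 * m) = 2 * int (q + 1)" using arg_cong[OF m3, of int] by simp
  ultimately have z2: "Zb (2 * int (q + 1)) ((xfun :: 'k poly fract) ^ (2 * m) + xfun ^ m)" by simp
  show ?thesis unfolding curve_poly_def
    by (intro PB_add PB_monom PB_const z1 z2)
qed

lemma PB_reduce:
  assumes "PB 0 H" "degree H \<ge> degree (curve_poly q :: 'k poly fract poly)"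
  shows "PB 0 (H - monom (lead_coeff H) (degree H - degree (curve_poly q :: 'k poly fract poly)) * (curve_poly q :: 'k poly fract poly))"
proof -
  have dc: "degree (curve_poly q :: 'k poly fract poly) = q + 1" by (rule deg_curve)
  have lc: "Zb (0 - 2 * int (degree H)) (lead_coeff H)" using assms(1) by (simp add: PB_def)
  have "PB (- 2 * int (q + 1)) (monom (lead_coeff H) (degree H - (q + 1)))"
  proof (rule PB_monom)
    have "- 2 * int (q + 1) - 2 * int (degree H - (q + 1)) = 0 - 2 * int (degree H)"
      using assms(2) dc by simp
    then show "Zb (- 2 * int (q + 1) - 2 * int (degree H - (q + 1))) (lead_coeff H)" using lc by simp
  qed
  then have "PB (- 2 * int (q + 1) + 2 * int (q + 1)) (monom (lead_coeff H) (degree H - (q + 1)) * curve_poly q)"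
    using PB_curve by (rule PB_mult)
  then have "PB 0 (monom (lead_coeff H) (degree H - (q + 1)) * curve_poly q)" by simp
  then show ?thesis unfolding dc by (rule PB_diff[OF assms(1)])
qed

definition rr :: "nat \<Rightarrow> nat" where "rr k = (2 * k + 2) div 3"

definition ee :: "nat \<Rightarrow> 'k poly fract poly" where
  "ee k = Polynomial.smult (inverse (xfun ^ rr k)) (monom 1 k)"

lemma PB_ee: "PB 0 (ee k)"
proof -
  have "PB (- 3 * int (rr k) + 2 * int k) (ee k)"
    unfolding ee_def by (rule PB_smult[OF Zb_inv_xpow]) (rule PB_monom, simp add: Zb_1)
  moreover have "- 3 * int (rr k) + 2 * int k \<le> 0" unfolding rr_def by linarith
  ultimately show ?thesis by (rule PB_mono)
qed

lemma integral_Oinf_PB: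
  fixes h :: "'k poly fract poly"
  assumes h: "PB 0 h"
  shows "integral_Oinf q h"
proof -
  have "\<forall>k. \<exists>QR. h * ee k = fst QR * curve_poly q + snd QR \<and> degree (snd QR) < q + 1 \<and> PB 0 (snd QR)"
  proof
    fix k
    have "PB 0 (h * ee k)" using PB_mult[OF h PB_ee] by simp
    then obtain Qt R where "h * ee k = Qt * curve_poly q + R" "degree R < degree (curve_poly q :: 'k poly fract poly)" "PB 0 R"
      using monic_div_pred[OF curve_monic deg_curve_ge1, of "PB 0", OF PB_reduce] by blast
    then show "\<exists>QR. h * ee k = fst QR * curve_poly q + snd QR \<and> degree (snd QR) < q + 1 \<and> PB 0 (snd QR)"
      using deg_curve by (intro exI[of _ "(Qt, R)"]) simp
  qed
  then have "\<exists>F. \<forall>k. h * ee k = fst (F k) * curve_poly q + snd (F k) \<and> degree (snd (F k)) < q + 1 \<and> PB 0 (snd (F k))"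
    by (rule choice)
  then obtain F where F: "\<And>k. h * ee k = fst (F k) * curve_poly q + snd (F k)" "\<And>k. degree (snd (F k)) < q + 1"
      "\<And>k. PB 0 (snd (F k))"
    by blast
  define M where "M k l = coeff (snd (F k)) l * xfun ^ rr l" for k l
  have MO: "M k l \<in> O_inf" for k l
  proof -
    have "Zb (0 - 2 * int l) (coeff (snd (F k)) l)" using F(3)[of k] by (simp add: PB_def)
    then have "Zb ((0 - 2 * int l) + 3 * int (rr l)) (M k l)" unfolding M_def by (rule Zb_mult[OF _ Zb_xpow])
    moreover have "(0 - 2 * int l) + 3 * int (rr l) < 3" unfolding rr_def by linarith
    ultimately show ?thesis by (simp add: O_inf_Zb Zb_round)
  qed
  have "\<exists>p. lead_coeff p = 1 \<and> (\<forall>i. coeff p i \<in> O_inf) \<and> curve_poly q dvd poly (map_poly (\<lambda>c. [:c:]) p) h"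
  proof (rule det_trick[OF subr_O_inf, of "q + 1" ee M])
    show "0 < q + 1" by simp
    show "ee 0 = 1" by (simp add: ee_def rr_def one_pCons monom_0)
    show "\<And>i j. i < q + 1 \<Longrightarrow> j < q + 1 \<Longrightarrow> M i j \<in> O_inf" using MO by simp
    fix k assume "k < q + 1"
    have s: "(\<Sum>j<q + 1. Polynomial.smult (M k j) (ee j)) = snd (F k)"
    proof -
      have "(\<Sum>j<q + 1. Polynomial.smult (M k j) (ee j)) = (\<Sum>j\<le>q. monom (coeff (snd (F k)) j) j)"
        by (intro sum.cong) (auto simp: M_def ee_def smult_monom xfun_nz)
      also have "\<dots> = snd (F k)"
        by (rule poly_as_sum_of_monoms') (use F(2)[of k] in simp)
      finally show ?thesis .
    qed
    show "curve_poly q dvd h * ee k - (\<Sum>j<q + 1. Polynomial.smult (M k j) (ee j))"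
      unfolding s F(1)[of k] by simp
  qed
  then show ?thesis unfolding integral_Oinf_def by (auto intro: dvd_imp_mod_0)
qed

lemma PB_ccdd: "PB (int k) (lift2 (cc k)) \<and> PB (int k - 1) (lift2 (dd k))"
proof (induction k)
  case 0 then show ?case using PB_1 by (simp add: cc_0 dd_0)
next
  case (Suc k)
  have Yp: "PB 2 (lift2 Yp)"
  proof -
    have "lift2 Yp = [:0, emb [:inverse b:]:]" by (simp add: Yp_def lift2_def map_poly_pCons emb_0 b0)
    also have "\<dots> = monom (emb [:inverse b:]) 1" by (simp add: monom_Suc monom_0)
    finally have "lift2 Yp = monom (emb [:inverse b:]) 1" .
    moreover have "PB 2 (monom (emb [:inverse b:]) 1)" by (rule PB_monom) (use Zb_emb[of "[:inverse b:]" 0] in simp)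
    ultimately show ?thesis by simp
  qed
  have cst: "PB 0 (lift2 [:[:c:]:])" for c :: 'k
    by (simp add: lift2_const) (rule PB_const, use Zb_emb[of "[:c:]" 0] in simp)
  have c1: "PB (0 + int k) (lift2 [:[:om:]:] * lift2 (cc k))" using Suc.IH cst by (intro PB_mult) auto
  have c2: "PB (2 + (int k - 1)) (lift2 Yp * lift2 (dd k))" using Suc.IH Yp by (intro PB_mult) auto
  have c1': "PB (int (Suc k)) (- (lift2 [:[:om:]:] * lift2 (cc k)))"
    using PB_neg[OF c1] by (rule PB_mono) simp
  have c2': "PB (int (Suc k)) (lift2 Yp * lift2 (dd k))"
    using c2 by (rule PB_mono) simp
  have "PB (int (Suc k)) (- (lift2 [:[:om:]:] * lift2 (cc k)) - lift2 Yp * lift2 (dd k))"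
    using c1' c2' by (rule PB_diff)
  moreover have d1: "PB (0 + (int k - 1)) (lift2 [:[:om ^ 2:]:] * lift2 (dd k))" using Suc.IH cst by (intro PB_mult) auto
  have "PB (int (Suc k) - 1) (lift2 (cc k) + lift2 [:[:om ^ 2:]:] * lift2 (dd k))"
    using Suc.IH d1 by (intro PB_add) (auto elim: PB_mono)
  ultimately show ?case
    unfolding cc_Suc dd_Suc lift2h.hom_minus lift2h.hom_mult lift2h.hom_uminus lift2h.hom_add mult_minus_left
    by (rule conjI)
qed

lemma PB_g0:
  assumes "2 \<le> n"
  shows "PB (int n) (lift2 (g0 n))"
proof -
  have Yp: "PB 2 (lift2 Yp)"
  proof -
    have "lift2 Yp = [:0, emb [:inverse b:]:]" by (simp add: Yp_def lift2_def map_poly_pCons emb_0 b0)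
    also have "\<dots> = monom (emb [:inverse b:]) 1" by (simp add: monom_Suc monom_0)
    finally have "lift2 Yp = monom (emb [:inverse b:]) 1" .
    moreover have "PB 2 (monom (emb [:inverse b:]) 1)" by (rule PB_monom) (use Zb_emb[of "[:inverse b:]" 0] in simp)
    ultimately show ?thesis by simp
  qed
  have Xa: "PB 3 (lift2 [:Xa:])"
  proof -
    have "degree Xa \<le> 1" by (simp add: Xa_def Xp_def)
    then have "Zb (3 * int 1) (emb Xa)" by (rule Zb_emb)
    then show ?thesis by (simp add: lift2_const PB_const)
  qed
  have one: "PB 2 (1 - lift2 Yp)" using Yp by (intro PB_diff) (auto intro: PB_mono[OF PB_1])
  have t1: "PB (2 + int (n - 2)) ((1 - lift2 Yp) * lift2 (cc (n - 2)))"
    using one PB_ccdd by (intro PB_mult) auto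
  have xy: "PB 3 (lift2 [:Xa:] - lift2 Yp)" using Xa Yp by (intro PB_diff) (auto elim: PB_mono)
  have t2: "PB (3 + (int (n - 2) - 1)) ((lift2 [:Xa:] - lift2 Yp) * lift2 (dd (n - 2)))"
    using xy PB_ccdd by (intro PB_mult) auto
  have "PB (int n) ((1 - lift2 Yp) * lift2 (cc (n - 2)) + (lift2 [:Xa:] - lift2 Yp) * lift2 (dd (n - 2)))"
    using t1 t2 assms by (intro PB_add) (auto elim!: PB_mono)
  then show ?thesis by (simp add: g0_def hom_distribs)
qed

lemma in_L3_g0:
  assumes "1 \<le> j"
  shows "in_L3 q j (lift2 (g0 (3 * j)))"
proof -
  have "PB (- 3 * int j + int (3 * j)) (Polynomial.smult (inverse (xfun ^ j)) (lift2 (g0 (3 * j))))"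
    by (rule PB_smult[OF Zb_inv_xpow PB_g0]) (use assms in simp)
  then have "PB 0 (Polynomial.smult (inverse (xfun ^ j)) (lift2 (g0 (3 * j))))" by simp
  then show ?thesis unfolding in_L3_def using integral_Kx_lift2 integral_Oinf_PB by blast
qed

end
theorem theorem3p10:
  fixes q p e :: nat and a b :: "'k::alg_closed_field"
  assumes "prime p" and "e \<ge> 1" and "q = p ^ e" and "CHAR('k) = p"
    and "q mod 3 = 2"
    and "a \<noteq> 0"
    and "b ^ (q + 1) + a ^ (2 * mm q) + a ^ (mm q) = 0"
    and "a ^ (mm q) \<noteq> -1"
    and "(a ^ mm q / (1 + a ^ mm q)) ^ 2 - a ^ mm q / (1 + a ^ mm q) + 1 = 0"
  shows "\<forall>i::nat. 1 \<le> i \<and> i \<le> mm q - 2 \<longrightarrow>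
           (\<exists>g. in_L3 q (i + 1) g \<and> val_at q a b g (3 * i + 2))"
proof -
  interpret X: X3 q p e a b using assms by unfold_locales
  show ?thesis
  proof (intro allI impI)
    fix i :: nat assume i: "1 \<le> i \<and> i \<le> mm q - 2"
    define n where "n = 3 * (i + 1)"
    have n2: "2 \<le> n" using n_def by simp
    have m3: "3 * mm q = q + 1" by (rule X.m3)
    have nq: "n - 1 < q" using m3 i unfolding n_def by presburger
    have n1: "n - 1 = 3 * i + 2" unfolding n_def by simp
    have n0: "n = 3 * i + 2 + 1" unfolding n_def by simp
    have "in_L3 q (i + 1) (lift2 (X.g0 n))" unfolding n_def by (rule X.in_L3_g0) simp
    moreover have "val_at q a b (lift2 (X.g0 n)) (3 * i + 2)"
    proof -
      have e1: "emb [:- a, 1:] ^ (3 * i + 2) = (emb [:- a, 1:] ^ (n - 1) :: 'k poly fract)" by (simp only: n1)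
      have e2: "emb [:- a, 1:] ^ (3 * i + 2 + 1) = (emb [:- a, 1:] ^ n :: 'k poly fract)" using n0 by simp
      show ?thesis unfolding val_at_def e1 e2 using X.loc_pos[OF n2 nq] X.loc_neg[OF n2 nq] by (rule conjI)
    qed
    ultimately show "\<exists>g. in_L3 q (i + 1) g \<and> val_at q a b g (3 * i + 2)" by blast
  qed
qed


end
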